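(* Suppose $\eta_j^2L^2B_j<b_j^2$. For the biased batched SVRG (Algorithm 3), $$\Big(b_j-\frac{(1-\lambda)^2\eta_j^2L^2B_j}{b_j}\Big)\mathbb{E}\|\tilde x_j-\tilde x_{j-1}\|^2+2\eta_jB_j\,\mathbb{E}\langle e_j,\tilde x_j-\tilde x_{j-1}\rangle\le-2(1-\lambda)\eta_jB_j\,\mathbb{E}\langle\nabla f(\tilde x_j),\tilde x_j-\tilde x_{j-1}\rangle+2(1-\lambda)^2\eta_j^2B_j\,\mathbb{E}\|\nabla f(\tilde x_j)\|^2+2\eta_j^2B_j\,\mathbb{E}\|e_j\|^2.$$
   Context: Setting: $f(x)=\frac1n\sum_{i=1}^n f_i(x)$ with each $f_i:\mathbb{R}^d\to\mathbb{R}$ differentiable and $L$-smooth: $\|\nabla f_i(x)-\nabla f_i(y)\|\le L\|x-y\|$. For $\mathcal I\subset\{1,\dots,n\}$, $\nabla f_{\mathcal I}(x)=\frac1{|\mathcal I|}\sum_{i\in\mathcal I}\nabla f_i(x)$. $N\sim\mathrm{Geom}(\gamma')$ means $P(N=k)=(1-\gamma')\gamma'^k$, $k\ge0$. Epoch $j$ of the batched SVRG scheme: $\mathcal I_j$ uniformly random of size $B_j$, $g_j=\nabla f_{\mathcal I_j}(\tilde x_{j-1})$, $x^{(j)}_0=\tilde x_{j-1}$; $N_j\sim\mathrm{Geom}(B_j/(B_j+b_j))$ drawn independently (mean $B_j/b_j$); for $k=0,\dots,N_j-1$, $\tilde{\mathcal I}_k$ uniformly random of size $b_j$ and $x^{(j)}_{k+1}=x^{(j)}_k-\eta_jv^{(j)}_k$;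 $\tilde x_j=x^{(j)}_{N_j}$. Algorithm 3 (biased, $0<\lambda<1$): $v^{(j)}_k=(1-\lambda)(\nabla f_{\tilde{\mathcal I}_k}(x^{(j)}_k)-\nabla f_{\tilde{\mathcal I}_k}(x^{(j)}_0))+\lambda g_j$, and $e_j=\lambda\nabla f_{\mathcal I_j}(\tilde x_{j-1})-(1-\lambda)\nabla f(\tilde x_{j-1})$. $\mathbb{E}$ is expectation over all randomness. *)

theory Defs
  imports "HOL-Analysis.Analysis" "HOL-Probability.Probability"
begin

definition batches :: "nat \<Rightarrow> nat \<Rightarrow> nat set set" where
  "batches n k = {I. I \<subseteq> {..<n} \<and> card I = k}"

definition gradI :: "(nat \<Rightarrow> 'a \<Rightarrow> 'a::real_vector) \<Rightarrow> nat set \<Rightarrow> 'a \<Rightarrow> 'a" where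
  "gradI Df I x = (1 / real (card I)) *\<^sub>R (\<Sum>i\<in>I. Df i x)"

definition gradf :: "(nat \<Rightarrow> 'a \<Rightarrow> 'a::real_vector) \<Rightarrow> nat \<Rightarrow> 'a \<Rightarrow> 'a" where
  "gradf Df n x = (1 / real n) *\<^sub>R (\<Sum>i<n. Df i x)"

text \<open>Inner loop of Algorithm 3 (biased estimator): starting from x (= x_0), anchor x0,
  anchor minibatch gradient g, runs one step per inner minibatch in the list.\<close>
fun inner_loop :: "(nat \<Rightarrow> 'a \<Rightarrow> 'a::real_vector) \<Rightarrow> real \<Rightarrow> real \<Rightarrow> 'a \<Rightarrow> 'a \<Rightarrow> 'a \<Rightarrow> nat set list \<Rightarrow> 'a" where
  "inner_loop Df lam eta x0 g x [] = x"
| "inner_loop Df lam eta x0 g x (S # Ss) =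
     inner_loop Df lam eta x0 g
       (x - eta *\<^sub>R ((1 - lam) *\<^sub>R (gradI Df S x - gradI Df S x0) + lam *\<^sub>R g)) Ss"

fun iid_list :: "nat \<Rightarrow> 'b pmf \<Rightarrow> 'b list pmf" where
  "iid_list 0 p = return_pmf []"
| "iid_list (Suc k) p = bind_pmf p (\<lambda>x. bind_pmf (iid_list k p) (\<lambda>xs. return_pmf (x # xs)))"

text \<open>Joint law of (x~_{j-1}, I_j, x~_j) for epoch j of Algorithm 3, where x~_{j-1} has
  (discrete) law X0, I_j is uniform of size B, N_j ~ Geom(B/(B+b)) i.e.
  P(N=k) = (1-gamma') gamma'^k, and the inner minibatches are iid uniform of size b.\<close>
definition epoch :: "(nat \<Rightarrow> 'a \<Rightarrow> 'a::real_vector) \<Rightarrow> nat \<Rightarrow> nat \<Rightarrow> nat \<Rightarrow> real \<Rightarrow> real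
    \<Rightarrow> 'a pmf \<Rightarrow> ('a \<times> nat set \<times> 'a) pmf" where
  "epoch Df n B b lam eta X0 =
     bind_pmf X0 (\<lambda>x0.
     bind_pmf (pmf_of_set (batches n B)) (\<lambda>I.
     bind_pmf (geometric_pmf (real b / (real B + real b))) (\<lambda>N.
     bind_pmf (iid_list N (pmf_of_set (batches n b))) (\<lambda>Ss.
     return_pmf (x0, I, inner_loop Df lam eta x0 (gradI Df I x0) x0 Ss)))))"

definition err :: "(nat \<Rightarrow> 'a \<Rightarrow> 'a::real_vector) \<Rightarrow> nat \<Rightarrow> real \<Rightarrow> nat set \<Rightarrow> 'a \<Rightarrow> 'a" where
  "err Df n lam I x0 = lam *\<^sub>R gradI Df I x0 - (1 - lam) *\<^sub>R gradf Df n x0"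

end

theory Submission
  imports Defs
begin


lemma bind_fub_a:
  fixes f :: "'b \<Rightarrow> real" and M :: "'a pmf"
  assumes int: "integrable (measure_pmf (bind_pmf M N)) f"
  shows "\<And>x. x \<in> set_pmf M \<Longrightarrow> integrable (measure_pmf (N x)) f"
    and "integrable (measure_pmf M) (\<lambda>x. integral\<^sup>L (measure_pmf (N x)) f)"
proof -
  have fin: "(\<integral>\<^sup>+x. \<integral>\<^sup>+y. ennreal (norm (f y)) \<partial>N x \<partial>M) < \<infinity>"
    using int by (simp add: integrable_iff_bounded)
  hence "AE x in M. (\<integral>\<^sup>+y. ennreal (norm (f y)) \<partial>N x) \<noteq> \<infinity>"
    by (intro nn_integral_PInf_AE) auto
  hence fx: "x \<in> set_pmf M \<Longrightarrow> (\<integral>\<^sup>+y. ennreal (norm (f y)) \<partial>N x) < \<infinity>" for x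
    by (simp add: AE_measure_pmf_iff top.not_eq_extremum)
  show intx: "\<And>x. x \<in> set_pmf M \<Longrightarrow> integrable (measure_pmf (N x)) f"
    using fx by (simp add: integrable_iff_bounded)
  have "(\<integral>\<^sup>+x. ennreal (norm (integral\<^sup>L (measure_pmf (N x)) f)) \<partial>M)
        \<le> (\<integral>\<^sup>+x. \<integral>\<^sup>+y. ennreal (norm (f y)) \<partial>N x \<partial>M)"
    using integral_norm_bound_ennreal[OF intx] 
    by (intro nn_integral_mono_AE) (auto simp: AE_measure_pmf_iff simp del: real_norm_def)
  with fin show intM: "integrable (measure_pmf M) (\<lambda>x. integral\<^sup>L (measure_pmf (N x)) f)"
    by (simp add: integrable_iff_bounded)
qed

lemma bind_fub:
  fixes f :: "'b \<Rightarrow> real" and M :: "'a pmf"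
  assumes int: "integrable (measure_pmf (bind_pmf M N)) f"
  shows "integral\<^sup>L (measure_pmf (bind_pmf M N)) f = (\<integral>x. integral\<^sup>L (measure_pmf (N x)) f \<partial>measure_pmf M)"
proof -
  have nonneg: "integral\<^sup>L (measure_pmf (bind_pmf M N)) g = (\<integral>x. integral\<^sup>L (measure_pmf (N x)) g \<partial>measure_pmf M)"
    if ig: "integrable (measure_pmf (bind_pmf M N)) g" and g0: "\<And>y. 0 \<le> g y" for g :: "'b \<Rightarrow> real"
  proof -
    note gx = bind_fub_a(1)[OF ig]
    have "integral\<^sup>L (measure_pmf (bind_pmf M N)) g = enn2real (\<integral>\<^sup>+ y. ennreal (g y) \<partial>bind_pmf M N)"
      by (rule integral_eq_nn_integral) (auto simp: g0)
    also have "\<dots> = enn2real (\<integral>\<^sup>+x. \<integral>\<^sup>+y. ennreal (g y) \<partial>N x \<partial>M)" by simp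
    also have "(\<integral>\<^sup>+x. \<integral>\<^sup>+y. ennreal (g y) \<partial>N x \<partial>M) = (\<integral>\<^sup>+x. ennreal (integral\<^sup>L (measure_pmf (N x)) g) \<partial>M)"
      by (intro nn_integral_cong_AE) (auto simp: AE_measure_pmf_iff g0 gx nn_integral_eq_integral)
    also have "enn2real \<dots> = (\<integral>x. integral\<^sup>L (measure_pmf (N x)) g \<partial>measure_pmf M)"
      by (rule integral_eq_nn_integral[symmetric]) (auto simp: g0)
    finally show ?thesis .
  qed
  note intx = bind_fub_a(1)[OF int]
  have e1: "f = (\<lambda>y. max (f y) 0 - max (- f y) 0)" by (auto simp: fun_eq_iff)
  have ip: "integrable (measure_pmf (bind_pmf M N)) (\<lambda>y. max (f y) 0)"
    and im: "integrable (measure_pmf (bind_pmf M N)) (\<lambda>y. max (- f y) 0)"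
    using int by auto
  have "integral\<^sup>L (measure_pmf (bind_pmf M N)) f =
     integral\<^sup>L (measure_pmf (bind_pmf M N)) (\<lambda>y. max (f y) 0) - integral\<^sup>L (measure_pmf (bind_pmf M N)) (\<lambda>y. max (- f y) 0)"
    by (subst e1, rule Bochner_Integration.integral_diff[OF ip im])
  also have "\<dots> = (\<integral>x. integral\<^sup>L (measure_pmf (N x)) (\<lambda>y. max (f y) 0) \<partial>M) - (\<integral>x. integral\<^sup>L (measure_pmf (N x)) (\<lambda>y. max (- f y) 0) \<partial>M)"
    using nonneg[OF ip] nonneg[OF im] by simp
  also have "\<dots> = (\<integral>x. integral\<^sup>L (measure_pmf (N x)) (\<lambda>y. max (f y) 0) - integral\<^sup>L (measure_pmf (N x)) (\<lambda>y. max (- f y) 0) \<partial>M)"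
    by (rule Bochner_Integration.integral_diff[symmetric, OF bind_fub_a(2)[OF ip] bind_fub_a(2)[OF im]])
  also have "\<dots> = (\<integral>x. integral\<^sup>L (measure_pmf (N x)) f \<partial>M)"
    by (intro integral_cong_AE) (auto simp: AE_measure_pmf_iff intx e1[symmetric] Bochner_Integration.integral_diff[symmetric])
  finally show ?thesis .
qed



lemma finite_batches[simp]: "finite (batches n k)"
  unfolding batches_def by (rule finite_subset[of _ "Pow {..<n}"]) auto

lemma card_batches: "card (batches n k) = n choose k"
  unfolding batches_def using n_subsets[of "{..<n}" k] by simp

lemma batches_ne: "k \<le> n \<Longrightarrow> batches n k \<noteq> {}"
  using card_batches[of n k] zero_less_binomial[of k n] by auto

lemma card_sup:
  assumes F: "F \<subseteq> {..<n}" "card F \<le> k"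
  shows "card {S \<in> batches n k. F \<subseteq> S} = (n - card F) choose (k - card F)"
proof -
  have fF: "finite F" using F finite_subset by blast
  have "bij_betw (\<lambda>S. S - F) {S \<in> batches n k. F \<subseteq> S} {T. T \<subseteq> {..<n} - F \<and> card T = k - card F}"
  proof (rule bij_betw_byWitness[where f'="\<lambda>T. T \<union> F"])
    show "\<forall>a\<in>{S \<in> batches n k. F \<subseteq> S}. a - F \<union> F = a" by auto
    show "\<forall>a'\<in>{T. T \<subseteq> {..<n} - F \<and> card T = k - card F}. a' \<union> F - F = a'" by auto
    show "(\<lambda>S. S - F) ` {S \<in> batches n k. F \<subseteq> S} \<subseteq> {T. T \<subseteq> {..<n} - F \<and> card T = k - card F}"
    proof
      fix T assume "T \<in> (\<lambda>S. S - F) ` {S \<in> batches n k. F \<subseteq> S}"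
      then obtain S where S: "S \<in> batches n k" "F \<subseteq> S" "T = S - F" by auto
      have "finite S" using S(1) unfolding batches_def using finite_subset by blast
      then show "T \<in> {T. T \<subseteq> {..<n} - F \<and> card T = k - card F}"
        using S by (auto simp: batches_def card_Diff_subset fF)
    qed
    show "(\<lambda>T. T \<union> F) ` {T. T \<subseteq> {..<n} - F \<and> card T = k - card F} \<subseteq> {S \<in> batches n k. F \<subseteq> S}"
    proof
      fix S assume "S \<in> (\<lambda>T. T \<union> F) ` {T. T \<subseteq> {..<n} - F \<and> card T = k - card F}"
      then obtain T where T: "T \<subseteq> {..<n} - F" "card T = k - card F" "S = T \<union> F" by auto
      have "finite T" using T(1) finite_subset by blast
      then have "card S = card T + card F" using T fF by (subst T(3), subst card_Un_disjoint) auto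
      then show "S \<in> {S \<in> batches n k. F \<subseteq> S}" using T F by (auto simp: batches_def)
    qed
  qed
  hence "card {S \<in> batches n k. F \<subseteq> S} = card {T. T \<subseteq> {..<n} - F \<and> card T = k - card F}"
    by (rule bij_betw_same_card)
  also have "\<dots> = card ({..<n} - F) choose (k - card F)" by (rule n_subsets) auto
  also have "card ({..<n} - F) = n - card F" using F fF by (simp add: card_Diff_subset)
  finally show ?thesis .
qed

lemma card_single:
  assumes "i < n" "1 \<le> k"
  shows "card {S \<in> batches n k. i \<in> S} = (n - 1) choose (k - 1)"
  using card_sup[of "{i}" n k] assms by simp

lemma card_pair:
  assumes "i < n" "j < n" "i \<noteq> j"
  shows "card {S \<in> batches n k. i \<in> S \<and> j \<in> S} = (if 2 \<le> k then (n - 2) choose (k - 2) else 0)"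
proof (cases "2 \<le> k")
  case True
  then show ?thesis using card_sup[of "{i,j}" n k] assms by (simp add: numeral_2_eq_2)
next
  case False
  have "{S \<in> batches n k. i \<in> S \<and> j \<in> S} = {}"
  proof (rule ccontr)
    assume "{S \<in> batches n k. i \<in> S \<and> j \<in> S} \<noteq> {}"
    then obtain S where S: "S \<in> batches n k" "i \<in> S" "j \<in> S" by auto
    have "finite S" using S(1) unfolding batches_def using finite_subset by blast
    hence "card {i,j} \<le> card S" using S by (intro card_mono) auto
    then show False using S False assms by (auto simp: batches_def)
  qed
  then show ?thesis using False by simp
qed

lemma sum_batches_lin:
  fixes h :: "nat \<Rightarrow> 'a::real_vector"
  assumes "1 \<le> k"
  shows "(\<Sum>S\<in>batches n k. \<Sum>i\<in>S. h i) = real ((n - 1) choose (k - 1)) *\<^sub>R (\<Sum>i<n. h i)"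
proof -
  have "(\<Sum>S\<in>batches n k. \<Sum>i\<in>S. h i) = (\<Sum>S\<in>batches n k. \<Sum>i<n. if i \<in> S then h i else 0)"
  proof (rule sum.cong[OF refl])
    fix S assume "S \<in> batches n k"
    hence "S \<subseteq> {..<n}" by (auto simp: batches_def)
    thus "(\<Sum>i\<in>S. h i) = (\<Sum>i<n. if i \<in> S then h i else 0)"
      using sum.inter_restrict[of "{..<n}" h S] by (simp add: Int_absorb1)
  qed
  also have "\<dots> = (\<Sum>i<n. \<Sum>S\<in>batches n k. if i \<in> S then h i else 0)" by (rule sum.swap)
  also have "\<dots> = (\<Sum>i<n. real ((n - 1) choose (k - 1)) *\<^sub>R h i)"
  proof (rule sum.cong[OF refl])
    fix i assume "i \<in> {..<n}"
    then show "(\<Sum>S\<in>batches n k. if i \<in> S then h i else 0) = real ((n - 1) choose (k - 1)) *\<^sub>R h i"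
      using card_single[of i n k] assms by (simp add: sum.inter_filter[symmetric] sum_constant_scaleR)
  qed
  finally show ?thesis by (simp add: scaleR_sum_right)
qed



lemma sum_sub_if: "(S::nat set) \<subseteq> {..<n} \<Longrightarrow> sum f S = (\<Sum>i<n. if i \<in> S then f i else (0::'b::comm_monoid_add))"
proof -
  assume "S \<subseteq> {..<n}"
  then have "S = {..<n} \<inter> S" by auto
  then have "sum f S = sum f ({..<n} \<inter> S)" by simp
  also have "\<dots> = (\<Sum>i<n. if i \<in> S then f i else 0)" by (rule sum.inter_restrict) simp
  finally show ?thesis .
qed

lemma sum_batches_quad:
  fixes w :: "nat \<Rightarrow> 'a::real_inner"
  assumes k: "1 \<le> k" and w0: "(\<Sum>i<n. w i) = 0"
  shows "(\<Sum>S\<in>batches n k. (norm (\<Sum>i\<in>S. w i))^2) \<le> real ((n - 1) choose (k - 1)) * (\<Sum>i<n. (norm (w i))^2)"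
proof -
  define A where "A = real ((n - 1) choose (k - 1))"
  define C where "C = real (if 2 \<le> k then (n - 2) choose (k - 2) else 0)"
  have C0: "0 \<le> C" by (simp add: C_def)
  have e1: "(norm (\<Sum>i\<in>S. w i))^2 = (\<Sum>i<n. \<Sum>j<n. if i \<in> S \<and> j \<in> S then w i \<bullet> w j else 0)"
    if "S \<in> batches n k" for S
  proof -
    have Ss: "S \<subseteq> {..<n}" using that by (auto simp: batches_def)
    have "(norm (\<Sum>i\<in>S. w i))^2 = (\<Sum>i\<in>S. \<Sum>j\<in>S. w i \<bullet> w j)"
      by (simp add: power2_norm_eq_inner inner_sum_left inner_sum_right)
         (rule sum.swap)
    also have "\<dots> = (\<Sum>i<n. if i \<in> S then (\<Sum>j<n. if j \<in> S then w i \<bullet> w j else 0) else 0)"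
      using Ss by (simp add: sum_sub_if[OF Ss])
    also have "\<dots> = (\<Sum>i<n. \<Sum>j<n. if i \<in> S \<and> j \<in> S then w i \<bullet> w j else 0)"
      by (rule sum.cong[OF refl]) auto
    finally show ?thesis .
  qed
  have "(\<Sum>S\<in>batches n k. (norm (\<Sum>i\<in>S. w i))^2)
      = (\<Sum>S\<in>batches n k. \<Sum>i<n. \<Sum>j<n. if i \<in> S \<and> j \<in> S then w i \<bullet> w j else 0)"
    using e1 by (rule sum.cong[OF refl])
  also have "\<dots> = (\<Sum>i<n. \<Sum>S\<in>batches n k. \<Sum>j<n. if i \<in> S \<and> j \<in> S then w i \<bullet> w j else 0)"
    by (rule sum.swap)
  also have "\<dots> = (\<Sum>i<n. \<Sum>j<n. \<Sum>S\<in>batches n k. if i \<in> S \<and> j \<in> S then w i \<bullet> w j else 0)"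
    by (rule sum.cong[OF refl], rule sum.swap)
  also have "\<dots> = (\<Sum>i<n. \<Sum>j<n. C * (w i \<bullet> w j) + (if i = j then (A - C) * (w i \<bullet> w j) else 0))"
  proof (intro sum.cong[OF refl])
    fix i j assume i: "i \<in> {..<n}" and j: "j \<in> {..<n}"
    have "(\<Sum>S\<in>batches n k. if i \<in> S \<and> j \<in> S then w i \<bullet> w j else 0)
        = real (card {S \<in> batches n k. i \<in> S \<and> j \<in> S}) * (w i \<bullet> w j)"
      by (simp add: sum.inter_filter[symmetric])
    also have "\<dots> = C * (w i \<bullet> w j) + (if i = j then (A - C) * (w i \<bullet> w j) else 0)"
    proof (cases "i = j")
      case True
      then show ?thesis using card_single[of i n k] i k by (simp add: A_def algebra_simps)
    next
      case False
      then show ?thesis using card_pair[of i n j k] i j by (simp add: C_def)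
    qed
    finally show "(\<Sum>S\<in>batches n k. if i \<in> S \<and> j \<in> S then w i \<bullet> w j else 0)
        = C * (w i \<bullet> w j) + (if i = j then (A - C) * (w i \<bullet> w j) else 0)" .
  qed
  also have "\<dots> = C * (\<Sum>i<n. \<Sum>j<n. w i \<bullet> w j) + (A - C) * (\<Sum>i<n. (norm (w i))^2)"
    by (simp add: sum.distrib sum_distrib_left power2_norm_eq_inner)
  also have "(\<Sum>i<n. \<Sum>j<n. w i \<bullet> w j) = 0"
    using w0 by (simp add: inner_sum_left[symmetric] inner_sum_right[symmetric])
  also have "C * 0 + (A - C) * (\<Sum>i<n. (norm (w i))^2) \<le> A * (\<Sum>i<n. (norm (w i))^2)"
    using C0 by (simp add: algebra_simps sum_nonneg)
  finally show ?thesis by (simp add: A_def)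
qed



lemma norm_diff_scale_sq:
  fixes z u :: "'a::real_inner"
  shows "(norm (z - t *\<^sub>R u))^2 = (norm z)^2 - 2 * t * (z \<bullet> u) + t^2 * (norm u)^2"
  unfolding power2_norm_eq_inner
  by (simp add: inner_diff_left inner_diff_right inner_commute algebra_simps power2_eq_square)

lemma norm_add_sq_le:
  fixes a c :: "'a::real_inner"
  shows "(norm (a + c))^2 \<le> 2 * (norm a)^2 + 2 * (norm c)^2"
proof -
  have "0 \<le> (norm (a - c))^2" by simp
  moreover have "(norm (a + c))^2 + (norm (a - c))^2 = 2 * (norm a)^2 + 2 * (norm c)^2"
    by (simp add: power2_norm_eq_inner inner_diff_left inner_diff_right inner_add_left inner_add_right inner_commute algebra_simps)
  ultimately show ?thesis by linarith
qed

lemma A_n_eq: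
  assumes "1 \<le> k"
  shows "real ((n - 1) choose (k - 1)) * real n = real k * real (card (batches n k))"
proof -
  have "(\<Sum>S\<in>batches n k. \<Sum>i\<in>S. (1::real)) = real ((n - 1) choose (k - 1)) *\<^sub>R (\<Sum>i<n. 1)"
    by (rule sum_batches_lin[OF assms])
  moreover have "(\<Sum>S\<in>batches n k. \<Sum>i\<in>S. (1::real)) = (\<Sum>S\<in>batches n k. real k)"
    by (rule sum.cong[OF refl]) (auto simp: batches_def)
  ultimately show ?thesis by simp
qed

lemma step_avg:
  fixes Df :: "nat \<Rightarrow> 'a::real_inner \<Rightarrow> 'a"
  assumes smooth: "\<And>i x y. i < n \<Longrightarrow> norm (Df i x - Df i y) \<le> L * norm (x - y)"
    and b: "1 \<le> b" "b \<le> n"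
  shows "(\<Sum>S\<in>batches n b. (norm (x - eta *\<^sub>R ((1 - lam) *\<^sub>R (gradI Df S x - gradI Df S x0) + lam *\<^sub>R g) - x0))^2) / real (card (batches n b))
   \<le> (norm (x - x0))^2 - 2 * eta * (((1 - lam) *\<^sub>R gradf Df n x + (lam *\<^sub>R g - (1 - lam) *\<^sub>R gradf Df n x0)) \<bullet> (x - x0))
     + 2 * eta^2 * (1-lam)^2 * (norm (gradf Df n x))^2 + 2 * eta^2 * (norm (lam *\<^sub>R g - (1 - lam) *\<^sub>R gradf Df n x0))^2
     + eta^2 * (1-lam)^2 * L^2 * (norm (x - x0))^2 / real b"
proof -
  define K where "K = real (card (batches n b))"
  define A where "A = real ((n - 1) choose (b - 1))"
  define D where "D = (norm (x - x0))^2"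
  define c where "c i = Df i x - Df i x0" for i
  define cbar where "cbar = (1 / real n) *\<^sub>R (\<Sum>i<n. c i)"
  define w where "w i = c i - cbar" for i
  define u where "u S = (1 / real b) *\<^sub>R (\<Sum>i\<in>S. w i)" for S
  define e where "e = lam *\<^sub>R g - (1 - lam) *\<^sub>R gradf Df n x0"
  define m where "m = (1 - lam) *\<^sub>R cbar + lam *\<^sub>R g"
  define z where "z = (x - x0) - eta *\<^sub>R m"
  define t where "t = eta * (1 - lam)"
  have n0: "real n > 0" and b0: "real b > 0" using b by auto
  have K0: "K > 0" using batches_ne[OF b(2)] by (simp add: K_def card_gt_0_iff)
  have cbar_eq: "cbar = gradf Df n x - gradf Df n x0"
    by (simp add: cbar_def c_def gradf_def sum_subtractf scaleR_diff_right)
  have sumc: "(\<Sum>i<n. c i) = real n *\<^sub>R cbar" using n0 by (simp add: cbar_def)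
  have w0: "(\<Sum>i<n. w i) = 0" by (simp add: w_def sum_subtractf sumc sum_constant_scaleR)
  have m_eq: "m = (1 - lam) *\<^sub>R gradf Df n x + e"
    by (simp add: m_def e_def cbar_eq algebra_simps)
  have gI: "gradI Df S x - gradI Df S x0 = cbar + u S" if S: "S \<in> batches n b" for S
  proof -
    have cS: "card S = b" using S by (simp add: batches_def)
    have "gradI Df S x - gradI Df S x0 = (1 / real b) *\<^sub>R (\<Sum>i\<in>S. c i)"
      by (simp add: gradI_def cS c_def sum_subtractf scaleR_diff_right)
    also have "(\<Sum>i\<in>S. c i) = (\<Sum>i\<in>S. w i) + real b *\<^sub>R cbar"
      by (simp add: w_def sum_subtractf cS sum_constant_scaleR)
    finally show ?thesis using b0 by (simp add: u_def scaleR_add_right)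
  qed
  have st: "x - eta *\<^sub>R ((1 - lam) *\<^sub>R (gradI Df S x - gradI Df S x0) + lam *\<^sub>R g) - x0 = z - t *\<^sub>R u S"
    if "S \<in> batches n b" for S
    by (simp add: gI[OF that] z_def m_def t_def algebra_simps)
  have "(\<Sum>S\<in>batches n b. (norm (x - eta *\<^sub>R ((1 - lam) *\<^sub>R (gradI Df S x - gradI Df S x0) + lam *\<^sub>R g) - x0))^2)
      = (\<Sum>S\<in>batches n b. (norm z)^2 - 2 * t * (z \<bullet> u S) + t^2 * (norm (u S))^2)"
    by (rule sum.cong[OF refl]) (simp add: st norm_diff_scale_sq)
  also have "\<dots> = K * (norm z)^2 - 2 * t * (z \<bullet> (\<Sum>S\<in>batches n b. u S)) + t^2 * (\<Sum>S\<in>batches n b. (norm (u S))^2)"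
    by (simp add: sum.distrib sum_subtractf sum_distrib_left inner_sum_right K_def)
  also have "(\<Sum>S\<in>batches n b. u S) = 0"
    using sum_batches_lin[OF b(1), of w n] w0 by (simp add: u_def scaleR_sum_right[symmetric])
  finally have eq1: "(\<Sum>S\<in>batches n b. (norm (x - eta *\<^sub>R ((1 - lam) *\<^sub>R (gradI Df S x - gradI Df S x0) + lam *\<^sub>R g) - x0))^2)
      = K * (norm z)^2 + t^2 * (\<Sum>S\<in>batches n b. (norm (u S))^2)" by simp
  have Wle: "(\<Sum>i<n. (norm (w i))^2) \<le> (\<Sum>i<n. (norm (c i))^2)"
  proof -
    have "(\<Sum>i<n. (norm (w i))^2) = (\<Sum>i<n. (norm (c i))^2 - 2 * (c i \<bullet> cbar) + (norm cbar)^2)"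
      by (rule sum.cong[OF refl]) (simp add: w_def power2_norm_eq_inner inner_diff_left inner_diff_right inner_commute)
    also have "\<dots> = (\<Sum>i<n. (norm (c i))^2) - 2 * ((\<Sum>i<n. c i) \<bullet> cbar) + real n * (norm cbar)^2"
      by (simp add: sum.distrib sum_subtractf sum_distrib_left inner_sum_left)
    also have "\<dots> = (\<Sum>i<n. (norm (c i))^2) - real n * (norm cbar)^2"
      by (simp add: sumc power2_norm_eq_inner)
    finally show ?thesis by simp
  qed
  have cle: "(\<Sum>i<n. (norm (c i))^2) \<le> real n * (L^2 * D)"
  proof -
    have "(norm (c i))^2 \<le> L^2 * D" if "i < n" for i
    proof -
      have "norm (c i) \<le> L * norm (x - x0)" using smooth[OF that] by (simp add: c_def)
      hence "(norm (c i))^2 \<le> (L * norm (x - x0))^2" by (rule power_mono) simp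
      thus ?thesis by (simp add: D_def power_mult_distrib)
    qed
    hence "(\<Sum>i<n. (norm (c i))^2) \<le> (\<Sum>i<n. L^2 * D)" by (intro sum_mono) auto
    thus ?thesis by simp
  qed
  have A0: "A \<ge> 0" by (simp add: A_def)
  have usum: "(\<Sum>S\<in>batches n b. (norm (u S))^2) \<le> K * L^2 * D / real b"
  proof -
    have "(\<Sum>S\<in>batches n b. (norm (u S))^2) = (\<Sum>S\<in>batches n b. (norm (\<Sum>i\<in>S. w i))^2) / (real b)^2"
      by (simp add: u_def power_mult_distrib power_divide sum_divide_distrib)
    also have "\<dots> \<le> A * (\<Sum>i<n. (norm (w i))^2) / (real b)^2"
      using sum_batches_quad[OF b(1) w0] by (simp add: A_def divide_right_mono)
    also have "\<dots> \<le> A * (real n * (L^2 * D)) / (real b)^2"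
      using Wle cle A0 by (intro divide_right_mono mult_left_mono) auto
    also have "A * (real n * (L^2 * D)) = real b * K * (L^2 * D)"
      using A_n_eq[OF b(1), of n] by (simp add: A_def K_def algebra_simps)
    also have "real b * K * (L^2 * D) / (real b)^2 = K * L^2 * D / real b"
      using b0 by (simp add: power2_eq_square)
    finally show ?thesis .
  qed
  have zeq: "(norm z)^2 = D - 2 * eta * (m \<bullet> (x - x0)) + eta^2 * (norm m)^2"
    by (simp add: z_def norm_diff_scale_sq D_def inner_commute)
  have mle: "(norm m)^2 \<le> 2 * (1-lam)^2 * (norm (gradf Df n x))^2 + 2 * (norm e)^2"
    using norm_add_sq_le[of "(1 - lam) *\<^sub>R gradf Df n x" e] by (simp add: m_eq power_mult_distrib)
  have "(K * (norm z)^2 + t^2 * (\<Sum>S\<in>batches n b. (norm (u S))^2)) / K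
     = (norm z)^2 + t^2 * (\<Sum>S\<in>batches n b. (norm (u S))^2) / K" using K0 by (simp add: field_simps)
  also have "t^2 * (\<Sum>S\<in>batches n b. (norm (u S))^2) / K \<le> t^2 * (K * L^2 * D / real b) / K"
    using usum K0 by (intro divide_right_mono mult_left_mono) auto
  also have "t^2 * (K * L^2 * D / real b) / K = eta^2 * (1-lam)^2 * L^2 * D / real b"
    using K0 by (simp add: t_def power_mult_distrib)
  finally have "(K * (norm z)^2 + t^2 * (\<Sum>S\<in>batches n b. (norm (u S))^2)) / K
      \<le> (norm z)^2 + eta^2 * (1-lam)^2 * L^2 * D / real b" by simp
  moreover have "eta^2 * (norm m)^2 \<le> eta^2 * (2 * (1-lam)^2 * (norm (gradf Df n x))^2 + 2 * (norm e)^2)"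
    using mle by (intro mult_left_mono) auto
  hence "eta^2 * (norm m)^2 \<le> 2 * eta^2 * (1-lam)^2 * (norm (gradf Df n x))^2 + 2 * eta^2 * (norm e)^2"
    by (simp add: algebra_simps)
  ultimately show ?thesis
    unfolding e_def[symmetric] m_eq[symmetric] D_def[symmetric] K_def[symmetric] eq1 using zeq
    by linarith
qed



definition stp :: "(nat \<Rightarrow> 'a \<Rightarrow> 'a::real_vector) \<Rightarrow> real \<Rightarrow> real \<Rightarrow> 'a \<Rightarrow> 'a \<Rightarrow> 'a \<Rightarrow> nat set \<Rightarrow> 'a" where
  "stp Df lam eta x0 g x S = x - eta *\<^sub>R ((1 - lam) *\<^sub>R (gradI Df S x - gradI Df S x0) + lam *\<^sub>R g)"

lemma inner_loop_snoc:
  "inner_loop Df lam eta x0 g x (Ss @ [S]) = stp Df lam eta x0 g (inner_loop Df lam eta x0 g x Ss) S"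
  by (induction Ss arbitrary: x) (auto simp: stp_def)

lemma iid_list_snoc:
  "iid_list (Suc k) p = bind_pmf (iid_list k p) (\<lambda>xs. map_pmf (\<lambda>s. xs @ [s]) p)"
proof (induction k)
  case 0
  then show ?case by (simp add: bind_return_pmf map_pmf_def)
next
  case (Suc k)
  have "iid_list (Suc (Suc k)) p = bind_pmf p (\<lambda>x. bind_pmf (iid_list (Suc k) p) (\<lambda>xs. return_pmf (x # xs)))"
    by (rule iid_list.simps(2))
  also have "\<dots> = bind_pmf p (\<lambda>x. bind_pmf (bind_pmf (iid_list k p) (\<lambda>xs. map_pmf (\<lambda>s. xs @ [s]) p)) (\<lambda>xs. return_pmf (x # xs)))"
    by (simp only: Suc)
  also have "\<dots> = bind_pmf p (\<lambda>x. bind_pmf (iid_list k p) (\<lambda>ys. bind_pmf p (\<lambda>s. return_pmf (x # ys @ [s]))))"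
    by (simp add: bind_assoc_pmf map_pmf_def bind_return_pmf del: iid_list.simps)
  also have "\<dots> = bind_pmf (iid_list (Suc k) p) (\<lambda>xs. map_pmf (\<lambda>s. xs @ [s]) p)"
    by (simp add: bind_assoc_pmf map_pmf_def bind_return_pmf)
  finally show ?case .
qed

lemma P_Suc:
  "map_pmf (inner_loop Df lam eta x0 g x0) (iid_list (Suc k) U)
   = bind_pmf (map_pmf (inner_loop Df lam eta x0 g x0) (iid_list k U)) (\<lambda>x. map_pmf (stp Df lam eta x0 g x) U)"
  unfolding iid_list_snoc
  by (simp add: map_bind_pmf bind_map_pmf pmf.map_comp o_def inner_loop_snoc del: iid_list.simps)

lemma Q_rec:
  fixes p lam eta :: real and Df :: "nat \<Rightarrow> 'a \<Rightarrow> 'a::real_vector" and x0 g :: 'a and U :: "nat set pmf"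
  assumes p: "0 < p" "p \<le> 1"
  defines "Q \<equiv> bind_pmf (geometric_pmf p) (\<lambda>N. map_pmf (inner_loop Df lam eta x0 g x0) (iid_list N U))"
  shows "Q = bind_pmf (bernoulli_pmf p) (\<lambda>c. if c then return_pmf x0 else bind_pmf Q (\<lambda>x. map_pmf (stp Df lam eta x0 g x) U))"
proof -
  have "Q = bind_pmf (bind_pmf (bernoulli_pmf p) (\<lambda>c. if c then return_pmf 0 else map_pmf Suc (geometric_pmf p)))
            (\<lambda>N. map_pmf (inner_loop Df lam eta x0 g x0) (iid_list N U))"
    unfolding Q_def using geometric_bind_pmf_unfold[of p] p by simp
  also have "\<dots> = bind_pmf (bernoulli_pmf p) (\<lambda>c. if c then return_pmf x0 else bind_pmf Q (\<lambda>x. map_pmf (stp Df lam eta x0 g x) U))"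
    unfolding bind_assoc_pmf
  proof (rule bind_pmf_cong[OF refl])
    fix c :: bool
    show "bind_pmf (if c then return_pmf 0 else map_pmf Suc (geometric_pmf p)) (\<lambda>N. map_pmf (inner_loop Df lam eta x0 g x0) (iid_list N U))
      = (if c then return_pmf x0 else bind_pmf Q (\<lambda>x. map_pmf (stp Df lam eta x0 g x) U))"
      by (cases c) (simp_all add: bind_return_pmf bind_map_pmf P_Suc Q_def bind_assoc_pmf iid_list.simps(1) del: iid_list.simps(2))
  qed
  finally show ?thesis .
qed



lemma integral_return_pmf_real: "integral\<^sup>L (measure_pmf (return_pmf a)) (f :: _ \<Rightarrow> real) = f a"
  by (simp add: return_pmf.rep_eq integral_return)

lemma integrable_inner_sq:
  fixes a d :: "'b \<Rightarrow> 'a::real_inner"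
  assumes "integrable (measure_pmf M) (\<lambda>x. (norm (a x))^2)" "integrable (measure_pmf M) (\<lambda>x. (norm (d x))^2)"
  shows "integrable (measure_pmf M) (\<lambda>x. a x \<bullet> d x)"
proof (rule Bochner_Integration.integrable_bound[OF Bochner_Integration.integrable_add[OF assms]])
  show "(\<lambda>x. a x \<bullet> d x) \<in> borel_measurable (measure_pmf M)" by simp
  show "AE x in measure_pmf M. norm (a x \<bullet> d x) \<le> norm ((norm (a x))^2 + (norm (d x))^2)"
  proof (rule AE_I2)
    fix x
    have "\<bar>a x \<bullet> d x\<bar> \<le> norm (a x) * norm (d x)" by (rule Cauchy_Schwarz_ineq2)
    also have "\<dots> \<le> (norm (a x))^2 + (norm (d x))^2"
    proof -
      have "0 \<le> (norm (a x) - norm (d x))^2" by simp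
      hence "2 * (norm (a x) * norm (d x)) \<le> (norm (a x))^2 + (norm (d x))^2"
        unfolding power2_diff by linarith
      moreover have "0 \<le> norm (a x) * norm (d x)" by simp
      ultimately show ?thesis by linarith
    qed
    finally show "norm (a x \<bullet> d x) \<le> norm ((norm (a x))^2 + (norm (d x))^2)" by simp
  qed
qed

lemma core:
  fixes Df :: "nat \<Rightarrow> 'a::real_inner \<Rightarrow> 'a" and x0 g :: 'a and lam eta L :: real and n B b :: nat
  assumes smooth: "\<And>i x y. i < n \<Longrightarrow> norm (Df i x - Df i y) \<le> L * norm (x - y)"
    and b: "1 \<le> b" "b \<le> n" and B: "1 \<le> B"
    and iD: "integrable (measure_pmf (bind_pmf (geometric_pmf (real b / (real B + real b))) (\<lambda>N. map_pmf (inner_loop Df lam eta x0 g x0) (iid_list N (pmf_of_set (batches n b))))))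
              (\<lambda>x. (norm (x - x0))^2)"
    and iF: "integrable (measure_pmf (bind_pmf (geometric_pmf (real b / (real B + real b))) (\<lambda>N. map_pmf (inner_loop Df lam eta x0 g x0) (iid_list N (pmf_of_set (batches n b))))))
              (\<lambda>x. (norm (gradf Df n x))^2)"
  shows "(\<integral>x. (real b - (1 - lam)^2 * eta^2 * L^2 * real B / real b) * (norm (x - x0))^2
            + 2 * eta * real B * ((lam *\<^sub>R g - (1 - lam) *\<^sub>R gradf Df n x0) \<bullet> (x - x0))
            + 2 * (1 - lam) * eta * real B * (gradf Df n x \<bullet> (x - x0))
            - 2 * (1 - lam)^2 * eta^2 * real B * (norm (gradf Df n x))^2
            - 2 * eta^2 * real B * (norm (lam *\<^sub>R g - (1 - lam) *\<^sub>R gradf Df n x0))^2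
          \<partial>measure_pmf (bind_pmf (geometric_pmf (real b / (real B + real b))) (\<lambda>N. map_pmf (inner_loop Df lam eta x0 g x0) (iid_list N (pmf_of_set (batches n b)))))) \<le> 0"
proof -
  define U where "U = pmf_of_set (batches n b)"
  define p where "p = real b / (real B + real b)"
  define Q where "Q = bind_pmf (geometric_pmf p) (\<lambda>N. map_pmf (inner_loop Df lam eta x0 g x0) (iid_list N U))"
  define K where "K x = map_pmf (stp Df lam eta x0 g x) U" for x
  define R where "R = bind_pmf Q K"
  define e where "e = lam *\<^sub>R g - (1 - lam) *\<^sub>R gradf Df n x0"
  define D where "D = (\<lambda>x. (norm (x - x0))^2)"
  define F where "F = (\<lambda>x. (norm (gradf Df n x))^2)"
  define E where "E = (norm e)^2"
  note iD' = iD[folded U_def p_def Q_def]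
  note iF' = iF[folded U_def p_def Q_def]
  have p: "0 < p" "p < 1" using b B by (auto simp: p_def field_simps)
  have Qr: "Q = bind_pmf (bernoulli_pmf p) (\<lambda>c. if c then return_pmf x0 else R)"
    unfolding R_def K_def Q_def by (rule Q_rec) (use p in auto)
  have Ufin: "finite (batches n b)" "batches n b \<noteq> {}" using batches_ne[OF b(2)] by auto
  have iDQ: "integrable Q D" unfolding Q_def D_def by (rule iD')
  have iFQ: "integrable Q F" unfolding Q_def F_def by (rule iF')
  have iDR: "integrable R D"
    using bind_fub_a(1)[OF iDQ[unfolded Qr], of False] p by simp
  have IQ: "integral\<^sup>L Q D = (1 - p) * integral\<^sup>L R D"
    using bind_fub[OF iDQ[unfolded Qr]] p by (simp add: Qr integral_return_pmf_real D_def)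
  define psi where "psi x = integral\<^sup>L (measure_pmf (K x)) D" for x
  have IR: "integral\<^sup>L R D = integral\<^sup>L Q psi"
    unfolding R_def psi_def by (rule bind_fub) (use iDR in \<open>simp add: R_def\<close>)
  have ipsi: "integrable Q psi"
    unfolding psi_def using bind_fub_a(2)[of Q K D] iDR by (simp add: R_def)
  have iGd: "integrable Q (\<lambda>x. gradf Df n x \<bullet> (x - x0))"
    by (rule integrable_inner_sq) (use iFQ iDQ in \<open>simp_all add: D_def F_def\<close>)
  have iEd: "integrable Q (\<lambda>x. e \<bullet> (x - x0))"
    by (rule integrable_inner_sq) (use iDQ in \<open>simp_all add: D_def\<close>)
  define phi where "phi x = D x - 2 * eta * (1 - lam) * (gradf Df n x \<bullet> (x - x0)) - 2 * eta * (e \<bullet> (x - x0))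
      + 2 * eta^2 * (1 - lam)^2 * F x + 2 * eta^2 * E + eta^2 * (1 - lam)^2 * L^2 / real b * D x" for x
  have psi_le: "psi x \<le> phi x" for x
  proof -
    have 1: "psi x = (\<Sum>S\<in>batches n b. (norm (x - eta *\<^sub>R ((1 - lam) *\<^sub>R (gradI Df S x - gradI Df S x0) + lam *\<^sub>R g) - x0))^2) / real (card (batches n b))"
      by (simp add: psi_def K_def U_def integral_pmf_of_set[OF Ufin(2,1)] D_def stp_def)
    have 2: "(\<Sum>S\<in>batches n b. (norm (x - eta *\<^sub>R ((1 - lam) *\<^sub>R (gradI Df S x - gradI Df S x0) + lam *\<^sub>R g) - x0))^2) / real (card (batches n b))
      \<le> (norm (x - x0))^2 - 2 * eta * (((1 - lam) *\<^sub>R gradf Df n x + e) \<bullet> (x - x0))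
     + 2 * eta^2 * (1-lam)^2 * (norm (gradf Df n x))^2 + 2 * eta^2 * (norm e)^2
     + eta^2 * (1-lam)^2 * L^2 * (norm (x - x0))^2 / real b"
      unfolding e_def by (rule step_avg[OF smooth b])
    have 3: "(norm (x - x0))^2 - 2 * eta * (((1 - lam) *\<^sub>R gradf Df n x + e) \<bullet> (x - x0))
     + 2 * eta^2 * (1-lam)^2 * (norm (gradf Df n x))^2 + 2 * eta^2 * (norm e)^2
     + eta^2 * (1-lam)^2 * L^2 * (norm (x - x0))^2 / real b = phi x"
      by (simp add: phi_def D_def F_def E_def inner_add_left algebra_simps)
    show ?thesis using 1 2 3 by linarith
  qed
  have iphi: "integrable Q phi"
    unfolding phi_def using iDQ iFQ iGd iEd by simp
  have Iphi: "integral\<^sup>L Q phi = integral\<^sup>L Q D - 2 * eta * (1 - lam) * integral\<^sup>L Q (\<lambda>x. gradf Df n x \<bullet> (x - x0))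
      - 2 * eta * integral\<^sup>L Q (\<lambda>x. e \<bullet> (x - x0))
      + 2 * eta^2 * (1 - lam)^2 * integral\<^sup>L Q F + 2 * eta^2 * E + eta^2 * (1 - lam)^2 * L^2 / real b * integral\<^sup>L Q D"
    unfolding phi_def using iDQ iFQ iGd iEd by simp
  have le1: "integral\<^sup>L Q psi \<le> integral\<^sup>L Q phi"
    by (rule integral_mono[OF ipsi iphi psi_le])
  have Ieq: "(\<integral>x. (real b - (1 - lam)^2 * eta^2 * L^2 * real B / real b) * (norm (x - x0))^2
            + 2 * eta * real B * (e \<bullet> (x - x0))
            + 2 * (1 - lam) * eta * real B * (gradf Df n x \<bullet> (x - x0))
            - 2 * (1 - lam)^2 * eta^2 * real B * (norm (gradf Df n x))^2
            - 2 * eta^2 * real B * (norm e)^2 \<partial>Q)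
       = (real b - (1 - lam)^2 * eta^2 * L^2 * real B / real b) * integral\<^sup>L Q D
            + 2 * eta * real B * integral\<^sup>L Q (\<lambda>x. e \<bullet> (x - x0))
            + 2 * (1 - lam) * eta * real B * integral\<^sup>L Q (\<lambda>x. gradf Df n x \<bullet> (x - x0))
            - 2 * (1 - lam)^2 * eta^2 * real B * integral\<^sup>L Q F
            - 2 * eta^2 * real B * E"
    using iDQ iFQ iGd iEd by (simp add: D_def F_def E_def)
  have b0: "real b > 0" using b by simp
  have key: "(real B + real b) * integral\<^sup>L Q D \<le> real B * integral\<^sup>L Q phi"
  proof -
    have "integral\<^sup>L Q D \<le> (1 - p) * integral\<^sup>L Q phi"
      using IQ IR le1 p by (simp add: mult_left_mono)
    moreover have "1 - p = real B / (real B + real b)" using b0 by (simp add: p_def field_simps)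
    ultimately show ?thesis using b0 B by (simp add: field_simps)
  qed
  show ?thesis
    unfolding U_def[symmetric] p_def[symmetric] Q_def[symmetric] e_def[symmetric] Ieq
    using key b0 unfolding Iphi by (simp add: field_simps)
qed



lemma integral_nonpos_pmf:
  fixes f :: "'b \<Rightarrow> real"
  assumes "\<And>x. x \<in> set_pmf M \<Longrightarrow> f x \<le> 0"
  shows "integral\<^sup>L (measure_pmf M) f \<le> 0"
proof -
  have "0 \<le> integral\<^sup>L (measure_pmf M) (\<lambda>x. - f x)"
    by (rule integral_nonneg_AE) (use assms in \<open>auto simp: AE_measure_pmf_iff\<close>)
  thus ?thesis by simp
qed

lemma epoch_eq:
  "epoch Df n B b lam eta X0 = bind_pmf X0 (\<lambda>x0. bind_pmf (pmf_of_set (batches n B)) (\<lambda>I.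
      map_pmf (\<lambda>x. (x0, I, x)) (bind_pmf (geometric_pmf (real b / (real B + real b)))
         (\<lambda>N. map_pmf (inner_loop Df lam eta x0 (gradI Df I x0) x0) (iid_list N (pmf_of_set (batches n b)))))))"
  unfolding epoch_def
  by (simp add: map_bind_pmf map_pmf_def bind_assoc_pmf bind_return_pmf del: iid_list.simps)

theorem lemmaB9:
  fixes fi :: "nat \<Rightarrow> 'a::euclidean_space \<Rightarrow> real"
    and Df :: "nat \<Rightarrow> 'a \<Rightarrow> 'a"
    and n B b :: nat and L lam eta :: real
    and X0 :: "'a pmf"
  assumes grad: "\<And>i x. i < n \<Longrightarrow> (fi i has_derivative (\<lambda>h. Df i x \<bullet> h)) (at x)"
    and smooth: "\<And>i x y. i < n \<Longrightarrow> norm (Df i x - Df i y) \<le> L * norm (x - y)"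
    and n: "1 \<le> n"
    and B: "1 \<le> B" "B \<le> n" and b: "1 \<le> b" "b \<le> n"
    and lam: "0 < lam" "lam < 1"
    and eta: "0 < eta"
    and step: "eta^2 * L^2 * real B < (real b)^2"
    and int1: "integrable (measure_pmf (epoch Df n B b lam eta X0))
                 (\<lambda>(x0, I, x). (norm (x - x0))^2)"
    and int2: "integrable (measure_pmf (epoch Df n B b lam eta X0))
                 (\<lambda>(x0, I, x). (norm (gradf Df n x))^2)"
    and int3: "integrable (measure_pmf (epoch Df n B b lam eta X0))
                 (\<lambda>(x0, I, x). (norm (err Df n lam I x0))^2)"
  shows
    "(real b - (1 - lam)^2 * eta^2 * L^2 * real B / real b)
        * measure_pmf.expectation (epoch Df n B b lam eta X0) (\<lambda>(x0, I, x). (norm (x - x0))^2)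
     + 2 * eta * real B
        * measure_pmf.expectation (epoch Df n B b lam eta X0) (\<lambda>(x0, I, x). err Df n lam I x0 \<bullet> (x - x0))
     \<le> - 2 * (1 - lam) * eta * real B
        * measure_pmf.expectation (epoch Df n B b lam eta X0) (\<lambda>(x0, I, x). gradf Df n x \<bullet> (x - x0))
     + 2 * (1 - lam)^2 * eta^2 * real B
        * measure_pmf.expectation (epoch Df n B b lam eta X0) (\<lambda>(x0, I, x). (norm (gradf Df n x))^2)
     + 2 * eta^2 * real B
        * measure_pmf.expectation (epoch Df n B b lam eta X0) (\<lambda>(x0, I, x). (norm (err Df n lam I x0))^2)"
proof -
  define M where "M = epoch Df n B b lam eta X0"
  define Q where "Q x0 I = bind_pmf (geometric_pmf (real b / (real B + real b)))
         (\<lambda>N. map_pmf (inner_loop Df lam eta x0 (gradI Df I x0) x0) (iid_list N (pmf_of_set (batches n b))))" for x0 I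
  define f1 where "f1 = (\<lambda>(x0::'a, I::nat set, x::'a). (norm (x - x0))^2)"
  define f2 where "f2 = (\<lambda>(x0::'a, I::nat set, x::'a). err Df n lam I x0 \<bullet> (x - x0))"
  define f3 where "f3 = (\<lambda>(x0::'a, I::nat set, x::'a). (norm (gradf Df n x))^2)"
  define f4 where "f4 = (\<lambda>(x0::'a, I::nat set, x::'a). gradf Df n x \<bullet> (x - x0))"
  define f5 where "f5 = (\<lambda>(x0::'a, I::nat set, x::'a). (norm (err Df n lam I x0))^2)"
  define c1 where "c1 = real b - (1 - lam)^2 * eta^2 * L^2 * real B / real b"
  define G where "G z = c1 * f1 z + 2 * eta * real B * f2 z + 2 * (1 - lam) * eta * real B * f4 z
      - 2 * (1 - lam)^2 * eta^2 * real B * f3 z - 2 * eta^2 * real B * f5 z" for z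
  have Meq: "M = bind_pmf X0 (\<lambda>x0. bind_pmf (pmf_of_set (batches n B)) (\<lambda>I. map_pmf (\<lambda>x. (x0, I, x)) (Q x0 I)))"
    unfolding M_def Q_def by (rule epoch_eq)
  have i1: "integrable M f1" using int1 by (simp add: M_def f1_def)
  have i3: "integrable M f3" using int2 by (simp add: M_def f3_def)
  have i5: "integrable M f5" using int3 by (simp add: M_def f5_def)
  have i2: "integrable M f2"
  proof -
    have "integrable M (\<lambda>z. (case z of (x0, I, x) \<Rightarrow> err Df n lam I x0) \<bullet> (case z of (x0, I, x) \<Rightarrow> x - x0))"
    proof (rule integrable_inner_sq)
      have "f5 = (\<lambda>z. (norm (case z of (x0, I, x) \<Rightarrow> err Df n lam I x0))^2)"
        by (auto simp: f5_def fun_eq_iff split: prod.splits)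
      with i5 show "integrable M (\<lambda>z. (norm (case z of (x0, I, x) \<Rightarrow> err Df n lam I x0))^2)" by simp
      have "f1 = (\<lambda>z. (norm (case z of (x0, I, x) \<Rightarrow> x - x0))^2)"
        by (auto simp: f1_def fun_eq_iff split: prod.splits)
      with i1 show "integrable M (\<lambda>z. (norm (case z of (x0, I, x) \<Rightarrow> x - x0))^2)" by simp
    qed
    moreover have "f2 = (\<lambda>z. (case z of (x0, I, x) \<Rightarrow> err Df n lam I x0) \<bullet> (case z of (x0, I, x) \<Rightarrow> x - x0))"
      by (auto simp: f2_def fun_eq_iff split: prod.splits)
    ultimately show ?thesis by simp
  qed
  have i4: "integrable M f4"
  proof -
    have "integrable M (\<lambda>z. (case z of (x0, I, x) \<Rightarrow> gradf Df n x) \<bullet> (case z of (x0, I, x) \<Rightarrow> x - x0))"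
    proof (rule integrable_inner_sq)
      have "f3 = (\<lambda>z. (norm (case z of (x0, I, x) \<Rightarrow> gradf Df n x))^2)"
        by (auto simp: f3_def fun_eq_iff split: prod.splits)
      with i3 show "integrable M (\<lambda>z. (norm (case z of (x0, I, x) \<Rightarrow> gradf Df n x))^2)" by simp
      have "f1 = (\<lambda>z. (norm (case z of (x0, I, x) \<Rightarrow> x - x0))^2)"
        by (auto simp: f1_def fun_eq_iff split: prod.splits)
      with i1 show "integrable M (\<lambda>z. (norm (case z of (x0, I, x) \<Rightarrow> x - x0))^2)" by simp
    qed
    moreover have "f4 = (\<lambda>z. (case z of (x0, I, x) \<Rightarrow> gradf Df n x) \<bullet> (case z of (x0, I, x) \<Rightarrow> x - x0))"
      by (auto simp: f4_def fun_eq_iff split: prod.splits)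
    ultimately show ?thesis by simp
  qed
  have iG: "integrable M G" unfolding G_def using i1 i2 i3 i4 i5 by simp
  have IG: "integral\<^sup>L M G = c1 * integral\<^sup>L M f1 + 2 * eta * real B * integral\<^sup>L M f2 + 2 * (1 - lam) * eta * real B * integral\<^sup>L M f4
      - 2 * (1 - lam)^2 * eta^2 * real B * integral\<^sup>L M f3 - 2 * eta^2 * real B * integral\<^sup>L M f5"
    unfolding G_def using i1 i2 i3 i4 i5 by simp
  have inner: "integral\<^sup>L (Q x0 I) (\<lambda>x. G (x0, I, x)) \<le> 0"
    if x0: "x0 \<in> set_pmf X0" and I: "I \<in> set_pmf (pmf_of_set (batches n B))" for x0 I
  proof -
    have j1: "integrable (Q x0 I) (\<lambda>x. (norm (x - x0))^2)"
      using bind_fub_a(1)[OF bind_fub_a(1)[OF i1[unfolded Meq] x0] I] by (simp add: f1_def)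
    have j3: "integrable (Q x0 I) (\<lambda>x. (norm (gradf Df n x))^2)"
      using bind_fub_a(1)[OF bind_fub_a(1)[OF i3[unfolded Meq] x0] I] by (simp add: f3_def)
    have "integral\<^sup>L (Q x0 I) (\<lambda>x. G (x0, I, x)) =
      (\<integral>x. (real b - (1 - lam)^2 * eta^2 * L^2 * real B / real b) * (norm (x - x0))^2
            + 2 * eta * real B * ((lam *\<^sub>R gradI Df I x0 - (1 - lam) *\<^sub>R gradf Df n x0) \<bullet> (x - x0))
            + 2 * (1 - lam) * eta * real B * (gradf Df n x \<bullet> (x - x0))
            - 2 * (1 - lam)^2 * eta^2 * real B * (norm (gradf Df n x))^2
            - 2 * eta^2 * real B * (norm (lam *\<^sub>R gradI Df I x0 - (1 - lam) *\<^sub>R gradf Df n x0))^2 \<partial>Q x0 I)"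
      by (simp add: G_def f1_def f2_def f3_def f4_def f5_def c1_def err_def)
    also have "\<dots> \<le> 0"
      using core[OF smooth b B(1) j1[unfolded Q_def] j3[unfolded Q_def]] by (simp add: Q_def)
    finally show ?thesis .
  qed
  have "integral\<^sup>L M G \<le> 0"
  proof -
    have "integral\<^sup>L M G = (\<integral>x0. integral\<^sup>L (bind_pmf (pmf_of_set (batches n B)) (\<lambda>I. map_pmf (\<lambda>x. (x0, I, x)) (Q x0 I))) G \<partial>X0)"
      unfolding Meq by (rule bind_fub) (use iG Meq in simp)
    also have "\<dots> \<le> 0"
    proof (rule integral_nonpos_pmf)
      fix x0 assume x0: "x0 \<in> set_pmf X0"
      have "integral\<^sup>L (bind_pmf (pmf_of_set (batches n B)) (\<lambda>I. map_pmf (\<lambda>x. (x0, I, x)) (Q x0 I))) G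
          = (\<integral>I. integral\<^sup>L (map_pmf (\<lambda>x. (x0, I, x)) (Q x0 I)) G \<partial>pmf_of_set (batches n B))"
        by (rule bind_fub, rule bind_fub_a(1)[OF iG[unfolded Meq] x0])
      also have "\<dots> \<le> 0"
        by (rule integral_nonpos_pmf) (simp add: inner x0)
      finally show "integral\<^sup>L (bind_pmf (pmf_of_set (batches n B)) (\<lambda>I. map_pmf (\<lambda>x. (x0, I, x)) (Q x0 I))) G \<le> 0" .
    qed
    finally show ?thesis .
  qed
  then show ?thesis using IG
    unfolding M_def f1_def f2_def f3_def f4_def f5_def c1_def by linarith
qed


end
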